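(* Let $U^{(1)},\dots,U^{(L)}$ be $d\times d$ unitary matrices, and let $|u^{(j)}_i\rangle$ denote the $i$-th column of $U^{(j)}$. For $k=0,1,\dots,dL-1$ let $$\mathcal{S}_k=\max\ \sigma_1^2\big(|u^{(j_1)}_{i_1}\rangle,\dots,|u^{(j_{k+1})}_{i_{k+1}}\rangle\big),$$ the maximum over all subsets $\{(i_1,j_1),\dots,(i_{k+1},j_{k+1})\}$ of cardinality $k+1$ of $\{1,\dots,d\}\times\{1,\dots,L\}$, where $\sigma_1(\cdot)$ is the largest singular value of the $d\times(k+1)$ matrix with the listed columns. For a unit vector $|\psi\rangle\in\mathbb{C}^d$ put $p^{(j)}_i=|\langle u^{(j)}_i|\psi\rangle|^2$. Then $$\{p^{(j)}_i\}_{i,j=1}^{d,L}\prec(1,\mathcal{S}_1-1,\mathcal{S}_2-\mathcal{S}_1,\dots,\mathcal{S}_{dL-1}-\mathcal{S}_{dL-2}),$$ and consequently $$\sum_{j=1}^L H\big(p^{(j)}\big)\ge-\sum_{i=1}^{dL-1}(\mathcal{S}_i-\mathcal{S}_{i-1})\ln(\mathcal{S}_i-\mathcal{S}_{i-1}).$$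
   Context: $H(x)=-\sum_i x_i\ln x_i$ is the Shannon entropy with $0\ln0=0$. For nonnegative vectors $x,y$ of the same length, $x\prec y$ means $\sum_{k=1}^n x^{\downarrow}_k\le\sum_{k=1}^n y^{\downarrow}_k$ for all $n$, with equality of total sums, where $x^{\downarrow}$ is $x$ sorted in decreasing order. Note $\mathcal{S}_0=1$. *)

theory Defs
  imports "HOL-Analysis.Analysis" "HOL-Library.Multiset"
begin

definition unitary_mat :: "complex^'n^'n \<Rightarrow> bool" where
  "unitary_mat U \<longleftrightarrow>
     (\<forall>i k. (\<Sum>m\<in>UNIV. cnj (U$m$i) * U$m$k) = (if i = k then 1 else 0))"

definition braket :: "complex^'n \<Rightarrow> complex^'n \<Rightarrow> complex" where
  "braket u v = (\<Sum>m\<in>UNIV. cnj (u$m) * v$m)"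

text \<open>Square of the largest singular value sigma_1 of the d x |T| matrix whose
  columns are v t, t in T, i.e. the squared spectral (operator 2-) norm.\<close>
definition sigma1_sq :: "('a \<Rightarrow> complex^'n) \<Rightarrow> 'a set \<Rightarrow> real" where
  "sigma1_sq v T = Sup { (norm (\<chi> m. \<Sum>t\<in>T. c t * (v t)$m))^2 | c.
                         (\<Sum>t\<in>T. (cmod (c t))^2) = 1 }"

definition majorized :: "real list \<Rightarrow> real list \<Rightarrow> bool" where
  "majorized xs ys \<longleftrightarrow> length xs = length ys \<and>
     (\<forall>n\<le>length xs. sum_list (take n (rev (sort xs))) \<le> sum_list (take n (rev (sort ys)))) \<and>
     sum_list xs = sum_list ys"

text \<open>Shannon entropy; note ln 0 = 0 in Isabelle so 0 ln 0 = 0.\<close>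
definition shannon_H :: "('a \<Rightarrow> real) \<Rightarrow> 'a set \<Rightarrow> real" where
  "shannon_H p A = - (\<Sum>i\<in>A. p i * ln (p i))"

definition calS :: "(nat \<Rightarrow> complex^'n^'n) \<Rightarrow> nat \<Rightarrow> nat \<Rightarrow> real" where
  "calS U L k = Max { sigma1_sq (\<lambda>(i,j). column i (U j)) T | T.
                       T \<subseteq> (UNIV :: 'n set) \<times> {..<L} \<and> card T = k + 1 }"

end

theory Submission
  imports Defs
begin

lemma normsq_vec: "(norm (x::complex^'n))^2 = (\<Sum>i\<in>UNIV. (cmod (x$i))^2)"
  unfolding norm_vec_def L2_set_def by (simp add: sum_nonneg)

lemma sig_bdd:
  fixes v :: "'a \<Rightarrow> complex^'n"
  assumes "finite T"
  shows "bdd_above { (norm (\<chi> m. \<Sum>t\<in>T. c t * (v t)$m))^2 | c. (\<Sum>t\<in>T. (cmod (c t))^2) = 1 }"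
proof -
  define B where "B = (\<Sum>m\<in>UNIV. \<Sum>t\<in>T. cmod ((v t)$m))"
  have "(norm (\<chi> m. \<Sum>t\<in>T. c t * (v t)$m))^2 \<le> B^2" if c: "(\<Sum>t\<in>T. (cmod (c t))^2) = 1" for c
  proof -
    have c1: "cmod (c t) \<le> 1" if "t \<in> T" for t
    proof -
      have "(cmod (c t))^2 \<le> 1" using c member_le_sum[of t T "\<lambda>t. (cmod (c t))^2"] assms that by simp
      thus ?thesis by (simp add: power_le_one_iff abs_square_le_1)
    qed
    have "norm (\<chi> m. \<Sum>t\<in>T. c t * (v t)$m) \<le> (\<Sum>m\<in>UNIV. norm ((\<chi> m. \<Sum>t\<in>T. c t * (v t)$m)$m))"
      unfolding norm_vec_def by (rule L2_set_le_sum) simp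
    also have "\<dots> \<le> B" unfolding B_def
    proof (rule sum_mono)
      fix m
      have "norm ((\<chi> m. \<Sum>t\<in>T. c t * (v t)$m)$m) \<le> (\<Sum>t\<in>T. norm (c t * (v t)$m))"
        by (simp add: norm_sum)
      also have "\<dots> \<le> (\<Sum>t\<in>T. cmod ((v t)$m))"
        by (rule sum_mono) (simp add: norm_mult c1 mult_left_le_one_le)
      finally show "norm ((\<chi> m. \<Sum>t\<in>T. c t * (v t)$m)$m) \<le> (\<Sum>t\<in>T. cmod ((v t)$m))" .
    qed
    finally show ?thesis by (simp add: power_mono)
  qed
  thus ?thesis by (intro bdd_aboveI[where M="B^2"]) blast
qed

lemma sig_ge:
  fixes v :: "'a \<Rightarrow> complex^'n"
  assumes "finite T" "(\<Sum>t\<in>T. (cmod (c t))^2) = 1"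
  shows "(norm (\<chi> m. \<Sum>t\<in>T. c t * (v t)$m))^2 \<le> sigma1_sq v T"
  unfolding sigma1_sq_def
proof (rule cSup_upper)
  show "(norm (\<chi> m. \<Sum>t\<in>T. c t * (v t)$m))^2 \<in> { (norm (\<chi> m. \<Sum>t\<in>T. c t * (v t)$m))^2 | c. (\<Sum>t\<in>T. (cmod (c t))^2) = 1 }"
    unfolding mem_Collect_eq by (rule exI[of _ c]) (simp add: assms(2))
  show "bdd_above { (norm (\<chi> m. \<Sum>t\<in>T. c t * (v t)$m))^2 | c. (\<Sum>t\<in>T. (cmod (c t))^2) = 1 }"
    by (rule sig_bdd[OF assms(1)])
qed

lemma sig_ex:
  assumes "t0 \<in> T" "finite T"
  shows "(\<Sum>t\<in>T. (cmod ((\<lambda>t. if t = t0 then 1 else 0::complex) t))^2) = 1"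
proof -
  have "(\<Sum>t\<in>T. (cmod ((\<lambda>t. if t = t0 then 1 else 0::complex) t))^2) = (\<Sum>t\<in>T. if t = t0 then 1 else (0::real))" by (rule sum.cong) auto
  also have "\<dots> = 1" using assms by simp
  finally show ?thesis .
qed

lemma ne_of_mem: "x \<in> S \<Longrightarrow> S \<noteq> {}" by auto

lemma sig_ne:
  assumes "t0 \<in> T" "finite T"
  shows "{ (norm (\<chi> m. \<Sum>t\<in>T. c t * ((v::'a \<Rightarrow> complex^'n) t)$m))^2 | c. (\<Sum>t\<in>T. (cmod (c t))^2) = 1 } \<noteq> {}"
  apply (rule ne_of_mem)
  unfolding mem_Collect_eq by (rule exI, rule conjI[OF refl sig_ex[OF assms]])

lemma sig_nonneg:
  fixes v :: "'a \<Rightarrow> complex^'n"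
  assumes "t0 \<in> T" "finite T"
  shows "0 \<le> sigma1_sq v T"
  using sig_ge[OF assms(2) sig_ex[OF assms], of v] by (rule order_trans[OF zero_le_power2])

lemma sig_mono:
  fixes v :: "'a \<Rightarrow> complex^'n"
  assumes "t0 \<in> T" "finite T'" "T \<subseteq> T'"
  shows "sigma1_sq v T \<le> sigma1_sq v T'"
proof -
  define A where "A = { (norm (\<chi> m. \<Sum>t\<in>T. c t * (v t)$m))^2 | c. (\<Sum>t\<in>T. (cmod (c t))^2) = 1 }"
  define B where "B = { (norm (\<chi> m. \<Sum>t\<in>T'. c t * (v t)$m))^2 | c. (\<Sum>t\<in>T'. (cmod (c t))^2) = 1 }"
  have fT: "finite T" using assms finite_subset by blast
  have "Sup A \<le> Sup B"
  proof (rule cSup_mono)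
    show "A \<noteq> {}" unfolding A_def using sig_ne[OF assms(1) fT] .
    show "bdd_above B" unfolding B_def using sig_bdd[OF assms(2)] .
    fix b assume "b \<in> A"
    then obtain c where c: "(\<Sum>t\<in>T. (cmod (c t))^2) = 1" and b: "b = (norm (\<chi> m. \<Sum>t\<in>T. c t * (v t)$m))^2"
      unfolding A_def by blast
    define c' where "c' t = (if t \<in> T then c t else 0)" for t
    have n1: "(\<Sum>t\<in>T'. (cmod (c' t))^2) = (\<Sum>t\<in>T. (cmod (c t))^2)"
      by (rule sum.mono_neutral_cong_right) (use assms(2,3) in \<open>auto simp: c'_def\<close>)
    have n2: "(\<chi> m. \<Sum>t\<in>T'. c' t * (v t)$m) = (\<chi> m. \<Sum>t\<in>T. c t * (v t)$m)"
      unfolding vec_eq_iff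
      by (intro allI, simp, rule sum.mono_neutral_cong_right) (use assms(2,3) in \<open>auto simp: c'_def\<close>)
    have n3: "b = (norm (\<chi> m. \<Sum>t\<in>T'. c' t * (v t)$m))^2 \<and> (\<Sum>t\<in>T'. (cmod (c' t))^2) = 1"
      using c b n1 n2 by simp
    have "b \<in> B"
      unfolding B_def mem_Collect_eq by (rule exI[of _ c'], rule n3)
    thus "\<exists>a\<in>B. b \<le> a" by blast
  qed
  thus ?thesis unfolding sigma1_sq_def A_def B_def .
qed

lemma sig_K1:
  fixes v :: "'a \<Rightarrow> complex^'n" and psi :: "complex^'n"
  assumes "finite T" "t0 \<in> T" "norm psi = 1"
  shows "(\<Sum>t\<in>T. (cmod (braket (v t) psi))^2) \<le> sigma1_sq v T"
proof -
  define b where "b t = braket (v t) psi" for t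
  define s where "s = (\<Sum>t\<in>T. (cmod (b t))^2)"
  have s0: "s \<ge> 0" by (simp add: s_def sum_nonneg)
  show ?thesis
  proof (cases "s = 0")
    case True
    thus ?thesis using sig_nonneg[OF assms(2,1), of v] by (simp add: s_def b_def)
  next
    case False
    hence spos: "s > 0" using s0 by simp
    define c where "c t = b t / complex_of_real (sqrt s)" for t
    have "(cmod (c t))^2 = (cmod (b t))^2 / s" for t
      unfolding c_def using spos by (simp add: norm_divide power_divide)
    hence cn: "(\<Sum>t\<in>T. (cmod (c t))^2) = 1"
      using spos by (simp add: sum_divide_distrib[symmetric] s_def)
    define w where "w = (\<chi> m. \<Sum>t\<in>T. c t * (v t)$m)"
    have "(\<Sum>m\<in>UNIV. cnj (psi$m) * w$m) = (\<Sum>m\<in>UNIV. \<Sum>t\<in>T. c t * (cnj (psi$m) * (v t)$m))"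
      by (simp add: w_def sum_distrib_left mult_ac)
    also have "\<dots> = (\<Sum>t\<in>T. \<Sum>m\<in>UNIV. c t * (cnj (psi$m) * (v t)$m))"
      by (rule sum.swap)
    also have "\<dots> = (\<Sum>t\<in>T. c t * cnj (b t))"
      by (simp add: b_def braket_def sum_distrib_left mult_ac)
    also have "\<dots> = (\<Sum>t\<in>T. b t * cnj (b t) / complex_of_real (sqrt s))"
      by (simp add: c_def mult.commute)
    also have "\<dots> = (\<Sum>t\<in>T. complex_of_real ((cmod (b t))^2 / sqrt s))"
      by (rule sum.cong[OF refl]) (simp only: complex_norm_square of_real_divide)
    also have "\<dots> = complex_of_real (s / sqrt s)"
      by (simp only: s_def sum_divide_distrib of_real_sum)
    also have "s / sqrt s = sqrt s" using s0 by (rule real_div_sqrt)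
    finally have z: "(\<Sum>m\<in>UNIV. cnj (psi$m) * w$m) = complex_of_real (sqrt s)" .
    have "sqrt s = cmod (\<Sum>m\<in>UNIV. cnj (psi$m) * w$m)" using z s0 by simp
    also have "\<dots> \<le> (\<Sum>m\<in>UNIV. cmod (cnj (psi$m) * w$m))" by (rule norm_sum)
    also have "\<dots> = (\<Sum>m\<in>UNIV. \<bar>cmod (psi$m)\<bar> * \<bar>cmod (w$m)\<bar>)" by (simp add: norm_mult)
    also have "\<dots> \<le> L2_set (\<lambda>m. cmod (psi$m)) UNIV * L2_set (\<lambda>m. cmod (w$m)) UNIV"
      by (rule L2_set_mult_ineq)
    also have "\<dots> = norm psi * norm w" by (simp add: norm_vec_def)
    finally have "sqrt s \<le> norm w" using assms(3) by simp
    hence "(sqrt s)^2 \<le> (norm w)^2" using s0 by (intro power_mono) auto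
    hence "s \<le> (norm w)^2" using s0 by simp
    also have "\<dots> \<le> sigma1_sq v T" unfolding w_def by (rule sig_ge[OF assms(1) cn])
    finally show ?thesis by (simp add: s_def b_def)
  qed
qed

lemma norm_scale_vec: "(norm (\<chi> m. a * (x::complex^'n)$m))^2 = (cmod a)^2 * (norm x)^2"
  by (simp add: normsq_vec norm_mult power_mult_distrib sum_distrib_left)

lemma sig_single:
  fixes v :: "'a \<Rightarrow> complex^'n"
  assumes "norm (v t) = 1"
  shows "sigma1_sq v {t} = 1"
proof -
  have "{ (norm (\<chi> m. \<Sum>s\<in>{t}. c s * (v s)$m))^2 | c. (\<Sum>s\<in>{t}. (cmod (c s))^2) = 1 } = {1}"
  proof (rule set_eqI, rule iffI)
    fix x assume "x \<in> { (norm (\<chi> m. \<Sum>s\<in>{t}. c s * (v s)$m))^2 | c. (\<Sum>s\<in>{t}. (cmod (c s))^2) = 1 }"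
    then obtain c where "x = (norm (\<chi> m. c t * (v t)$m))^2" "(cmod (c t))^2 = 1"
      unfolding mem_Collect_eq by auto
    thus "x \<in> {1}" using assms by (simp add: norm_scale_vec)
  next
    fix x assume "x \<in> {1::real}"
    hence "x = (norm (\<chi> m. \<Sum>s\<in>{t}. (\<lambda>_. 1) s * (v s)$m))^2 \<and> (\<Sum>s\<in>{t}. (cmod ((\<lambda>_. 1::complex) s))^2) = 1"
      using norm_scale_vec[of 1 "v t"] assms by simp
    thus "x \<in> { (norm (\<chi> m. \<Sum>s\<in>{t}. c s * (v s)$m))^2 | c. (\<Sum>s\<in>{t}. (cmod (c s))^2) = 1 }"
      unfolding mem_Collect_eq by (rule exI[of _ "\<lambda>_. 1"])
  qed
  thus ?thesis unfolding sigma1_sq_def by simp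
qed

definition adj :: "complex^'n^'n \<Rightarrow> complex^'n^'n" where
  "adj A = (\<chi> i m. cnj (A$m$i))"

lemma unitary_adj_iff: "unitary_mat A \<longleftrightarrow> adj A ** A = mat 1"
  by (simp add: unitary_mat_def matrix_matrix_mult_def mat_def vec_eq_iff adj_def)

lemma adj_adj: "adj (adj A) = A"
  by (simp add: adj_def vec_eq_iff)

lemma unitary_adj: "unitary_mat A \<Longrightarrow> unitary_mat (adj A)"
  unfolding unitary_adj_iff adj_adj using matrix_left_right_inverse by blast

lemma unitary_norm:
  assumes "unitary_mat (A::complex^'n^'n)"
  shows "(\<Sum>m\<in>UNIV. (cmod (\<Sum>i\<in>UNIV. A$m$i * c i))^2) = (\<Sum>i\<in>UNIV. (cmod (c i))^2)"
proof -
  have u: "(\<Sum>m\<in>UNIV. cnj (A$m$k) * A$m$i) = (if k = i then 1 else 0)" for i k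
    using assms unfolding unitary_mat_def by blast
  have "complex_of_real (\<Sum>m\<in>UNIV. (cmod (\<Sum>i\<in>UNIV. A$m$i * c i))^2)
     = (\<Sum>m\<in>UNIV. (\<Sum>i\<in>UNIV. A$m$i * c i) * cnj (\<Sum>k\<in>UNIV. A$m$k * c k))"
    by (simp only: of_real_sum complex_norm_square)
  also have "\<dots> = (\<Sum>m\<in>UNIV. \<Sum>i\<in>UNIV. \<Sum>k\<in>UNIV. (A$m$i * c i) * cnj (A$m$k * c k))"
    by (simp add: sum_product)
  also have "\<dots> = (\<Sum>i\<in>UNIV. \<Sum>m\<in>UNIV. \<Sum>k\<in>UNIV. (A$m$i * c i) * cnj (A$m$k * c k))"
    by (rule sum.swap)
  also have "\<dots> = (\<Sum>i\<in>UNIV. \<Sum>k\<in>UNIV. \<Sum>m\<in>UNIV. (A$m$i * c i) * cnj (A$m$k * c k))"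
    by (rule sum.cong[OF refl], rule sum.swap)
  also have "\<dots> = (\<Sum>i\<in>UNIV. \<Sum>k\<in>UNIV. c i * cnj (c k) * (\<Sum>m\<in>UNIV. cnj (A$m$k) * A$m$i))"
    by (simp add: sum_distrib_left mult_ac)
  also have "\<dots> = (\<Sum>i\<in>UNIV. c i * cnj (c i))"
  proof (rule sum.cong[OF refl])
    fix i
    have "(\<Sum>k\<in>UNIV. c i * cnj (c k) * (\<Sum>m\<in>UNIV. cnj (A$m$k) * A$m$i)) = (\<Sum>k\<in>UNIV. if k = i then c i * cnj (c k) else 0)"
      by (rule sum.cong[OF refl]) (simp add: u)
    thus "(\<Sum>k\<in>UNIV. c i * cnj (c k) * (\<Sum>m\<in>UNIV. cnj (A$m$k) * A$m$i)) = c i * cnj (c i)" by simp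
  qed
  also have "\<dots> = complex_of_real (\<Sum>i\<in>UNIV. (cmod (c i))^2)"
    by (simp only: of_real_sum complex_norm_square)
  finally show ?thesis using of_real_eq_iff by blast
qed

lemma unitary_parseval:
  assumes "unitary_mat (U::complex^'n^'n)"
  shows "(\<Sum>i\<in>UNIV. (cmod (braket (column i U) psi))^2) = (norm psi)^2"
proof -
  have "(\<Sum>i\<in>UNIV. (cmod (braket (column i U) psi))^2) = (\<Sum>i\<in>UNIV. (cmod (\<Sum>m\<in>UNIV. adj U$i$m * psi$m))^2)"
    by (simp add: braket_def column_def adj_def)
  also have "\<dots> = (\<Sum>m\<in>UNIV. (cmod (psi$m))^2)"
    by (rule unitary_norm[OF unitary_adj[OF assms]])
  finally show ?thesis by (simp add: normsq_vec)
qed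

lemma unitary_col_norm:
  assumes "unitary_mat (U::complex^'n^'n)"
  shows "norm (column i U) = 1"
proof -
  have "(\<Sum>m\<in>UNIV. (cmod (\<Sum>k\<in>UNIV. U$m$k * (if k = i then 1 else 0)))^2) = (\<Sum>k\<in>UNIV. (cmod (if k = i then 1 else (0::complex)))^2)"
    by (rule unitary_norm[OF assms])
  also have "\<dots> = (\<Sum>k\<in>UNIV. if k = i then 1 else (0::real))" by (rule sum.cong) auto
  also have "(\<Sum>m\<in>UNIV. (cmod (\<Sum>k\<in>UNIV. U$m$k * (if k = i then 1 else 0)))^2) = (\<Sum>m\<in>UNIV. (cmod (U$m$i))^2)"
  proof (rule sum.cong[OF refl])
    fix m
    have "(\<Sum>k\<in>UNIV. U$m$k * (if k = i then 1 else 0)) = (\<Sum>k\<in>UNIV. if k = i then U$m$k else 0)"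
      by (rule sum.cong) auto
    thus "(cmod (\<Sum>k\<in>UNIV. U$m$k * (if k = i then 1 else 0)))^2 = (cmod (U$m$i))^2" by simp
  qed
  finally have "(norm (column i U))^2 = 1" by (simp add: normsq_vec column_def)
  thus ?thesis using norm_ge_zero[of "column i U"] by (auto simp: power2_eq_1_iff)
qed

lemma csq:
  fixes z :: "nat \<Rightarrow> complex"
  shows "(cmod (\<Sum>j<L. z j))^2 \<le> real L * (\<Sum>j<L. (cmod (z j))^2)"
proof -
  have "cmod (\<Sum>j<L. z j) \<le> (\<Sum>j<L. cmod (z j))" by (rule norm_sum)
  also have "\<dots> = (\<Sum>j<L. \<bar>cmod (z j)\<bar> * \<bar>(\<lambda>_. 1::real) j\<bar>)" by simp
  also have "\<dots> \<le> L2_set (\<lambda>j. cmod (z j)) {..<L} * L2_set (\<lambda>_. 1::real) {..<L}"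
    by (rule L2_set_mult_ineq)
  also have "\<dots> = sqrt (\<Sum>j<L. (cmod (z j))^2) * sqrt (real L)"
    by (simp add: L2_set_def)
  finally have h: "cmod (\<Sum>j<L. z j) \<le> sqrt (\<Sum>j<L. (cmod (z j))^2) * sqrt (real L)" .
  have "(cmod (\<Sum>j<L. z j))^2 \<le> (sqrt (\<Sum>j<L. (cmod (z j))^2) * sqrt (real L))^2"
    by (rule power_mono[OF h norm_ge_zero])
  also have "\<dots> = (\<Sum>j<L. (cmod (z j))^2) * real L"
    by (simp add: power_mult_distrib sum_nonneg)
  finally show ?thesis by (simp add: mult.commute)
qed

lemma sig_full_le:
  fixes U :: "nat \<Rightarrow> complex^'n^'n"
  assumes "L \<ge> 1" "\<And>j. j < L \<Longrightarrow> unitary_mat (U j)"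
  shows "sigma1_sq (\<lambda>(i,j). column i (U j)) (UNIV \<times> {..<L}) \<le> real L"
  unfolding sigma1_sq_def
proof (rule cSup_least)
  obtain i0 :: 'n where True by blast
  have "(i0, 0) \<in> (UNIV::'n set) \<times> {..<L}" using assms(1) by auto
  thus "{ (norm (\<chi> m. \<Sum>t\<in>UNIV \<times> {..<L}. c t * ((\<lambda>(i,j). column i (U j)) t)$m))^2 | c. (\<Sum>t\<in>UNIV \<times> {..<L}. (cmod (c t))^2) = 1 } \<noteq> {}"
    by (rule sig_ne) simp
  fix x assume "x \<in> { (norm (\<chi> m. \<Sum>t\<in>UNIV \<times> {..<L}. c t * ((\<lambda>(i,j). column i (U j)) t)$m))^2 | c. (\<Sum>t\<in>UNIV \<times> {..<L}. (cmod (c t))^2) = 1 }"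
  then obtain c where c: "(\<Sum>t\<in>UNIV \<times> {..<L}. (cmod (c t))^2) = 1"
    and x: "x = (norm (\<chi> m. \<Sum>t\<in>UNIV \<times> {..<L}. c t * ((\<lambda>(i,j). column i (U j)) t)$m))^2"
    unfolding mem_Collect_eq by blast
  define a where "a j m = (\<Sum>i\<in>UNIV. U j $ m $ i * c (i,j))" for j m
  have w: "(\<chi> m. \<Sum>t\<in>UNIV \<times> {..<L}. c t * ((\<lambda>(i,j). column i (U j)) t)$m) $ m = (\<Sum>j<L. a j m)" for m
  proof -
    have "(\<chi> m. \<Sum>t\<in>UNIV \<times> {..<L}. c t * ((\<lambda>(i,j). column i (U j)) t)$m) $ m
        = (\<Sum>(i,j)\<in>UNIV \<times> {..<L}. c (i,j) * U j $ m $ i)"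
      by (simp add: column_def case_prod_unfold)
    also have "\<dots> = (\<Sum>i\<in>UNIV. \<Sum>j<L. c (i,j) * U j $ m $ i)"
      by (rule sum.cartesian_product[symmetric])
    also have "\<dots> = (\<Sum>j<L. \<Sum>i\<in>UNIV. c (i,j) * U j $ m $ i)"
      by (rule sum.swap)
    also have "\<dots> = (\<Sum>j<L. a j m)"
      by (simp add: a_def mult.commute)
    finally show ?thesis .
  qed
  have cc: "(\<Sum>j<L. \<Sum>i\<in>UNIV. (cmod (c (i,j)))^2) = 1"
  proof -
    have "(\<Sum>j<L. \<Sum>i\<in>UNIV. (cmod (c (i,j)))^2) = (\<Sum>i\<in>UNIV. \<Sum>j<L. (cmod (c (i,j)))^2)"
      by (rule sum.swap)
    also have "\<dots> = (\<Sum>(i,j)\<in>UNIV \<times> {..<L}. (cmod (c (i,j)))^2)"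
      by (rule sum.cartesian_product)
    also have "\<dots> = 1" using c by (simp add: case_prod_unfold)
    finally show ?thesis .
  qed
  have "x = (\<Sum>m\<in>UNIV. (cmod (\<Sum>j<L. a j m))^2)"
    unfolding x normsq_vec w ..
  also have "\<dots> \<le> (\<Sum>m\<in>UNIV. real L * (\<Sum>j<L. (cmod (a j m))^2))"
    by (rule sum_mono) (rule csq)
  also have "\<dots> = real L * (\<Sum>j<L. \<Sum>m\<in>UNIV. (cmod (a j m))^2)"
    by (simp add: sum_distrib_left sum.swap[of _ UNIV])
  also have "\<dots> = real L * (\<Sum>j<L. \<Sum>i\<in>UNIV. (cmod (c (i,j)))^2)"
  proof -
    have "(\<Sum>m\<in>UNIV. (cmod (a j m))^2) = (\<Sum>i\<in>UNIV. (cmod (c (i,j)))^2)" if "j < L" for j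
      unfolding a_def by (rule unitary_norm[OF assms(2)[OF that]])
    thus ?thesis by simp
  qed
  also have "\<dots> = real L" using cc by simp
  finally show "x \<le> real L" .
qed

lemma sub_add_notin:
  assumes "M \<subseteq># add_mset a N" "a \<notin># M"
  shows "M \<subseteq># N"
  unfolding subseteq_mset_def
proof
  fix y
  have "count M y \<le> count (add_mset a N) y" using assms(1) by (simp add: subseteq_mset_def)
  thus "count M y \<le> count N y" using assms(2) by (cases "y = a") (auto simp: not_in_iff)
qed

lemma msub_image:
  assumes "finite A" "M \<subseteq># image_mset f (mset_set A)"
  shows "\<exists>T\<subseteq>A. M = image_mset f (mset_set T)"
  using assms
proof (induction A arbitrary: M rule: finite_induct)
  case empty thus ?case by simp
next
  case (insert x F)
  have IM: "image_mset f (mset_set (insert x F)) = add_mset (f x) (image_mset f (mset_set F))"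
    using insert.hyps by simp
  show ?case
  proof (cases "f x \<in># M")
    case True
    have "add_mset (f x) (M - {#f x#}) \<subseteq># add_mset (f x) (image_mset f (mset_set F))"
      using insert.prems IM True by simp
    hence "M - {#f x#} \<subseteq># image_mset f (mset_set F)"
      by (simp only: mset_subset_eq_add_mset_cancel)
    then obtain T where T: "T \<subseteq> F" "M - {#f x#} = image_mset f (mset_set T)"
      using insert.IH by blast
    have fT: "finite T" using T insert.hyps finite_subset by blast
    have "x \<notin> T" using T insert.hyps by blast
    hence "image_mset f (mset_set (insert x T)) = add_mset (f x) (image_mset f (mset_set T))"
      using fT by simp
    moreover have M1: "M = add_mset (f x) (M - {#f x#})" using True by simp
    have "M = add_mset (f x) (image_mset f (mset_set T))"
      by (subst M1) (simp only: T(2))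
    ultimately have "M = image_mset f (mset_set (insert x T))" by simp
    moreover have "insert x T \<subseteq> insert x F" using T by blast
    ultimately show ?thesis by blast
  next
    case False
    have "M \<subseteq># image_mset f (mset_set F)"
      using sub_add_notin[of M "f x"] insert.prems IM False by simp
    then obtain T where "T \<subseteq> F" "M = image_mset f (mset_set T)"
      using insert.IH by blast
    thus ?thesis by blast
  qed
qed

lemma top_sum:
  fixes w :: "real list"
  assumes "sorted_wrt (\<ge>) w" "M \<subseteq># mset w"
  shows "sum_mset M \<le> sum_list (take (size M) w)"
  using assms
proof (induction w arbitrary: M)
  case Nil thus ?case by simp
next
  case (Cons a w)
  have sw: "sorted_wrt (\<ge>) w" and amax: "\<forall>b\<in>set w. b \<le> a" using Cons.prems(1) by auto
  show ?case
  proof (cases "M = {#}")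
    case True thus ?thesis by simp
  next
    case Mne: False
    then obtain n where sz: "size M = Suc n" by (cases "size M") auto
    show ?thesis
    proof (cases "a \<in># M")
      case True
      have "add_mset a (M - {#a#}) \<subseteq># add_mset a (mset w)" using Cons.prems(2) True by simp
      hence "M - {#a#} \<subseteq># mset w" by (simp only: mset_subset_eq_add_mset_cancel)
      hence "sum_mset (M - {#a#}) \<le> sum_list (take (size (M - {#a#})) w)" using Cons.IH sw by blast
      moreover have "size (M - {#a#}) = n" using sz True by (simp add: size_Diff_singleton)
      moreover have "sum_mset (add_mset a (M - {#a#})) = a + sum_mset (M - {#a#})"
        by simp
      hence "sum_mset M = a + sum_mset (M - {#a#})" using True by simp
      ultimately show ?thesis using sz by simp
    next
      case False
      obtain b where b: "b \<in># M" using Mne by blast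
      have Mw: "M \<subseteq># mset w" using sub_add_notin[of M a "mset w"] Cons.prems(2) False by simp
      have "b \<in># mset w" using Mw b by (rule mset_subset_eqD)
      hence "b \<in> set w" by simp
      hence ba: "b \<le> a" using amax by blast
      have "M - {#b#} \<subseteq># mset w" using diff_subset_eq_self Mw by (rule subset_mset.order_trans)
      hence "sum_mset (M - {#b#}) \<le> sum_list (take (size (M - {#b#})) w)" using Cons.IH sw by blast
      moreover have "size (M - {#b#}) = n" using sz b by (simp add: size_Diff_singleton)
      moreover have "sum_mset (add_mset b (M - {#b#})) = b + sum_mset (M - {#b#})"
        by simp
      hence "sum_mset M = b + sum_mset (M - {#b#})" using b by simp
      ultimately show ?thesis using sz ba by simp
    qed
  qed
qed

lemma sorted_rev_sort: "sorted_wrt (\<ge>) (rev (sort (zs::real list)))"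
  using sorted_sort[of zs] by (simp add: sorted_wrt_rev)

lemma take_le_top:
  fixes zs :: "real list"
  shows "sum_list (take n zs) \<le> sum_list (take n (rev (sort zs)))"
proof -
  have sub: "mset (take n zs) \<subseteq># mset (rev (sort zs))"
  proof -
    have "mset (take n zs @ drop n zs) = mset (take n zs) + mset (drop n zs)" by (rule mset_append)
    hence "mset zs = mset (take n zs) + mset (drop n zs)" by simp
    thus ?thesis by simp
  qed
  have "sum_list (take n zs) = sum_mset (mset (take n zs))" by (simp add: sum_mset_sum_list)
  also have "\<dots> \<le> sum_list (take (size (mset (take n zs))) (rev (sort zs)))"
    by (rule top_sum[OF sorted_rev_sort sub])
  also have "take (size (mset (take n zs))) (rev (sort zs)) = take n (rev (sort zs))"
    by (simp add: min_def)
  finally show ?thesis .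
qed

lemma sumtake:
  assumes "k \<le> length zs"
  shows "sum_list (take k zs) = (\<Sum>i<k. zs!i)"
  using assms
proof (induction k)
  case 0 thus ?case by simp
next
  case (Suc k)
  thus ?case by (simp add: take_Suc_conv_app_nth)
qed

lemma xlnx_tangent:
  fixes x y :: real
  assumes "x > 0" "y \<ge> 0"
  shows "x * ln x + (ln x + 1) * (y - x) \<le> y * ln y"
proof (cases "y = 0")
  case True thus ?thesis using assms by (simp add: algebra_simps)
next
  case False
  hence yp: "y > 0" using assms by simp
  have "ln (x / y) \<le> x / y - 1" using assms yp by (intro ln_le_minus_one) simp
  hence "ln x - ln y \<le> x / y - 1" using assms yp by (simp add: ln_div)
  hence "y * (ln x - ln y) \<le> y * (x / y - 1)" using yp by (intro mult_left_mono) auto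
  hence "y * ln x - y * ln y \<le> x - y" using yp by (simp add: algebra_simps)
  thus ?thesis by (simp add: algebra_simps)
qed

lemma abel:
  fixes c d :: "nat \<Rightarrow> real"
  assumes "\<And>i j. i \<le> j \<Longrightarrow> j \<le> n \<Longrightarrow> c j \<le> c i" "\<And>k. k \<le> n \<Longrightarrow> 0 \<le> (\<Sum>i<k. d i)"
  shows "c n * (\<Sum>i<n. d i) \<le> (\<Sum>i<n. c i * d i)"
  using assms
proof (induction n)
  case 0 thus ?case by simp
next
  case (Suc n)
  have IH: "c n * (\<Sum>i<n. d i) \<le> (\<Sum>i<n. c i * d i)"
    using Suc.IH Suc.prems by auto
  have "c (Suc n) * (\<Sum>i<Suc n. d i) \<le> c n * (\<Sum>i<Suc n. d i)"
    using Suc.prems(1)[of n "Suc n"] Suc.prems(2)[of "Suc n"] by (intro mult_right_mono) auto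
  also have "\<dots> = c n * (\<Sum>i<n. d i) + c n * d n" by (simp add: algebra_simps)
  also have "\<dots> \<le> (\<Sum>i<n. c i * d i) + c n * d n" using IH by simp
  finally show ?case by simp
qed

lemma karamata_pos:
  fixes x y :: "nat \<Rightarrow> real"
  assumes "\<And>i. i < n \<Longrightarrow> 0 < x i" "\<And>i. i < n \<Longrightarrow> 0 \<le> y i"
    "\<And>i j. i \<le> j \<Longrightarrow> j < n \<Longrightarrow> x j \<le> x i"
    "\<And>k. k \<le> n \<Longrightarrow> (\<Sum>i<k. x i) \<le> (\<Sum>i<k. y i)"
    "(\<Sum>i<n. x i) = (\<Sum>i<n. y i)"
  shows "(\<Sum>i<n. x i * ln (x i)) \<le> (\<Sum>i<n. y i * ln (y i))"
proof (cases n)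
  case 0 thus ?thesis by simp
next
  case (Suc n')
  define c where "c i = ln (x (min i n')) + 1" for i
  have cmono: "c j \<le> c i" if "i \<le> j" "j \<le> n" for i j
    unfolding c_def using assms(1,3) that Suc by (auto simp: min_def)
  have "c n * (\<Sum>i<n. y i - x i) \<le> (\<Sum>i<n. c i * (y i - x i))"
    by (rule abel[OF cmono]) (use assms(4) in \<open>auto simp: sum_subtractf\<close>)
  hence "0 \<le> (\<Sum>i<n. c i * (y i - x i))" using assms(5) by (simp add: sum_subtractf)
  moreover have "(\<Sum>i<n. x i * ln (x i) + c i * (y i - x i)) \<le> (\<Sum>i<n. y i * ln (y i))"
  proof (rule sum_mono)
    fix i assume "i \<in> {..<n}"
    hence "c i = ln (x i) + 1" "0 < x i" "0 \<le> y i" using Suc assms(1,2) by (auto simp: c_def min_def)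
    thus "x i * ln (x i) + c i * (y i - x i) \<le> y i * ln (y i)" using xlnx_tangent by simp
  qed
  ultimately show ?thesis by (simp add: sum.distrib)
qed

lemma karamata:
  fixes x y :: "nat \<Rightarrow> real"
  assumes "\<And>i. i < n \<Longrightarrow> 0 \<le> x i" "\<And>i. i < n \<Longrightarrow> 0 \<le> y i"
    "\<And>i j. i \<le> j \<Longrightarrow> j < n \<Longrightarrow> x j \<le> x i"
    "\<And>k. k \<le> n \<Longrightarrow> (\<Sum>i<k. x i) \<le> (\<Sum>i<k. y i)"
    "(\<Sum>i<n. x i) = (\<Sum>i<n. y i)"
  shows "(\<Sum>i<n. x i * ln (x i)) \<le> (\<Sum>i<n. y i * ln (y i))"
  using assms
proof (induction n)
  case 0 thus ?case by simp
next
  case (Suc n)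
  show ?case
  proof (cases "x n > 0")
    case True
    have "0 < x i" if "i < Suc n" for i
      using Suc.prems(3)[of i n] that True by simp
    thus ?thesis by (rule karamata_pos) (use Suc.prems in auto)
  next
    case False
    hence xn: "x n = 0" using Suc.prems(1)[of n] by simp
    have le: "(\<Sum>i<n. x i) \<le> (\<Sum>i<n. y i)" using Suc.prems(4)[of n] by simp
    have eq: "(\<Sum>i<n. x i) = (\<Sum>i<n. y i) + y n" using Suc.prems(5) xn by simp
    have yn: "y n = 0" using le eq Suc.prems(2)[of n] by simp
    have "(\<Sum>i<n. x i * ln (x i)) \<le> (\<Sum>i<n. y i * ln (y i))"
      by (rule Suc.IH) (use Suc.prems le eq yn in auto)
    thus ?thesis using xn yn by simp
  qed
qed

theorem mainTheorem7:
  fixes U :: "nat \<Rightarrow> complex^'n^'n" and L :: nat and psi :: "complex^'n"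
  assumes "L \<ge> 1"
    and "\<And>j. j < L \<Longrightarrow> unitary_mat (U j)"
    and "norm psi = 1"
  defines "p \<equiv> (\<lambda>(i::'n, j::nat). (cmod (braket (column i (U j)) psi))^2)"
    and "d \<equiv> CARD('n)"
    and "S \<equiv> calS U L"
  shows "majorized
           (sorted_list_of_multiset (image_mset p (mset_set ((UNIV :: 'n set) \<times> {..<L}))))
           (1 # map (\<lambda>k. S k - S (k - 1)) [1..<d * L])
       \<and> (\<Sum>j<L. shannon_H (\<lambda>i. p (i, j)) UNIV)
           \<ge> - (\<Sum>k=1..d * L - 1. (S k - S (k - 1)) * ln (S k - S (k - 1)))"
proof -
  define v where "v = (\<lambda>(i::'n, j::nat). column i (U j))"
  define I where "I = (UNIV :: 'n set) \<times> {..<L}"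
  define N where "N = d * L"
  have finI: "finite I" unfolding I_def by simp
  have dpos: "d \<ge> 1" unfolding d_def using zero_less_card_finite[where 'a='n] by linarith
  have cardI: "card I = N" unfolding I_def N_def d_def by (simp add: card_cartesian_product)
  have N1: "N \<ge> 1" unfolding N_def using dpos assms(1) by simp
  have pv: "p = (\<lambda>t. (cmod (braket (v t) psi))^2)"
    unfolding p_def v_def by (rule ext) (simp add: case_prod_unfold)
  have pnn: "0 \<le> p t" for t unfolding pv by simp
  have Sdef: "S k = Max {sigma1_sq v T | T. T \<subseteq> I \<and> card T = k + 1}" for k
    by (simp add: S_def calS_def v_def I_def)
  have Sfin: "finite {sigma1_sq v T | T. T \<subseteq> I \<and> card T = k + 1}" for k
  proof -
    have "{sigma1_sq v T | T. T \<subseteq> I \<and> card T = k + 1} = (sigma1_sq v) ` {T. T \<subseteq> I \<and> card T = k + 1}"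
      by blast
    moreover have "finite {T. T \<subseteq> I \<and> card T = k + 1}"
      by (rule finite_subset[of _ "Pow I"]) (use finI in auto)
    ultimately show ?thesis by simp
  qed
  have S_ge: "sigma1_sq v T \<le> S k" if "T \<subseteq> I" "card T = k + 1" for T k
  proof -
    have "sigma1_sq v T \<in> {sigma1_sq v T | T. T \<subseteq> I \<and> card T = k + 1}"
      unfolding mem_Collect_eq using that by (intro exI[of _ T]) simp
    thus ?thesis unfolding Sdef by (rule Max_ge[OF Sfin])
  qed
  have S_att: "\<exists>T. T \<subseteq> I \<and> card T = k + 1 \<and> S k = sigma1_sq v T" if "k + 1 \<le> N" for k
  proof -
    have "k + 1 \<le> card I" using that cardI by simp
    then obtain T0 where T0: "T0 \<subseteq> I" "card T0 = k + 1" by (rule obtain_subset_with_card_n)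
    have "sigma1_sq v T0 \<in> {sigma1_sq v T | T. T \<subseteq> I \<and> card T = k + 1}"
      unfolding mem_Collect_eq using T0 by (intro exI[of _ T0]) simp
    hence "{sigma1_sq v T | T. T \<subseteq> I \<and> card T = k + 1} \<noteq> {}" by (rule ne_of_mem)
    hence "S k \<in> {sigma1_sq v T | T. T \<subseteq> I \<and> card T = k + 1}"
      unfolding Sdef by (rule Max_in[OF Sfin])
    thus ?thesis unfolding mem_Collect_eq by blast
  qed
  have col1: "norm (v t) = 1" if "t \<in> I" for t
  proof -
    obtain i j where t: "t = (i, j)" by (cases t)
    have "j < L" using that t unfolding I_def by simp
    thus ?thesis unfolding t v_def using unitary_col_norm[OF assms(2)] by simp
  qed
  have S0: "S 0 = 1"
  proof -
    obtain T where T: "T \<subseteq> I" "card T = 1" "S 0 = sigma1_sq v T" using S_att[of 0] N1 by auto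
    obtain t where "T = {t}" using T(2) by (rule card_1_singletonE)
    moreover have "t \<in> I" using T(1) \<open>T = {t}\<close> by simp
    ultimately show ?thesis using T(3) sig_single[of v t, OF col1[of t]] by simp
  qed
  have Smono: "S k \<le> S (Suc k)" if "k + 1 < N" for k
  proof -
    have kN: "k + 1 \<le> N" using that by simp
    obtain T where T: "T \<subseteq> I" "card T = k + 1" "S k = sigma1_sq v T" using S_att[OF kN] by blast
    have "T \<noteq> I" using T that cardI by auto
    then obtain x where x: "x \<in> I" "x \<notin> T" using T by blast
    have fT: "finite T" using T finI finite_subset by blast
    have "T \<noteq> {}" using T(2) by auto
    then obtain t0 where t0: "t0 \<in> T" by blast
    have "sigma1_sq v T \<le> sigma1_sq v (insert x T)"
      by (rule sig_mono[OF t0]) (use fT in auto)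
    also have "\<dots> \<le> S (Suc k)"
      by (rule S_ge) (use T x fT in auto)
    finally show ?thesis using T by simp
  qed
  have Sfull: "S (N - 1) = sigma1_sq v I"
  proof -
    obtain T where T: "T \<subseteq> I" "card T = N - 1 + 1" "S (N - 1) = sigma1_sq v T" using S_att[of "N - 1"] N1 by auto
    have "T = I" using card_subset_eq[OF finI T(1)] T(2) cardI N1 by simp
    thus ?thesis using T by simp
  qed
  have sumP: "(\<Sum>t\<in>I. p t) = real L"
  proof -
    have "(\<Sum>t\<in>I. p t) = (\<Sum>(i,j)\<in>(UNIV::'n set) \<times> {..<L}. (cmod (braket (column i (U j)) psi))^2)"
      unfolding I_def p_def ..
    also have "\<dots> = (\<Sum>i\<in>UNIV. \<Sum>j<L. (cmod (braket (column i (U j)) psi))^2)"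
      by (rule sum.cartesian_product[symmetric])
    also have "\<dots> = (\<Sum>j<L. \<Sum>i\<in>UNIV. (cmod (braket (column i (U j)) psi))^2)"
      by (rule sum.swap)
    also have "\<dots> = (\<Sum>j<L. 1)"
      by (rule sum.cong[OF refl]) (simp add: unitary_parseval assms(2,3))
    finally show ?thesis by simp
  qed
  have sigI: "sigma1_sq v I = real L"
  proof (rule antisym)
    show "sigma1_sq v I \<le> real L" unfolding v_def I_def by (rule sig_full_le[OF assms(1,2)])
    obtain i0 :: 'n where True by blast
    have "(i0, 0) \<in> I" using assms(1) unfolding I_def by simp
    from sig_K1[OF finI this assms(3), of v] show "real L \<le> sigma1_sq v I"
      using sumP unfolding pv by simp
  qed
  define xs where "xs = sorted_list_of_multiset (image_mset p (mset_set I))"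
  define X where "X = rev (sort xs)"
  define g where "g = (\<lambda>k. S k - S (k - 1))"
  define ys where "ys = 1 # map g [1..<N]"
  have msX: "mset X = image_mset p (mset_set I)" by (simp add: X_def xs_def)
  have msxs: "mset xs = image_mset p (mset_set I)" by (simp add: xs_def)
  have lenX: "length X = N"
  proof -
    have "length X = size (mset X)" by simp
    thus ?thesis using msX finI cardI by simp
  qed
  have lenxs: "length xs = N"
  proof -
    have "length xs = size (mset xs)" by simp
    thus ?thesis using msxs finI cardI by simp
  qed
  have lenys: "length ys = N" unfolding ys_def using N1 by simp
  have ys0: "ys ! 0 = 1" unfolding ys_def by simp
  have ysS: "ys ! (Suc i) = S (Suc i) - S i" if "Suc i < N" for i
  proof -
    have u: "[1..<N] ! i = Suc i" using nth_upt[of 1 i N] that by simp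
    show ?thesis unfolding ys_def g_def using that u by simp
  qed
  have ysnn: "0 \<le> ys ! i" if "i < N" for i
  proof (cases i)
    case 0 thus ?thesis using ys0 by simp
  next
    case (Suc i') thus ?thesis using ysS[of i'] Smono[of i'] that by simp
  qed
  have ysum: "(\<Sum>i<Suc k. ys ! i) = S k" if "Suc k \<le> N" for k
    using that
  proof (induction k)
    case 0 thus ?case using ys0 S0 by simp
  next
    case (Suc k)
    thus ?case using ysS[of k] by simp
  qed
  have setX: "0 \<le> z" if "z \<in> set X" for z
  proof -
    have "z \<in># mset X" using that by simp
    hence "z \<in> p ` I" unfolding msX using finI by simp
    thus ?thesis using pnn by auto
  qed
  have Q: "sum_list (take k X) \<le> sum_list (take k ys)" if "k \<le> N" for k
  proof (cases k)
    case 0 thus ?thesis by simp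
  next
    case (Suc k')
    have "mset (take k X @ drop k X) = mset (take k X) + mset (drop k X)" by (rule mset_append)
    hence "mset X = mset (take k X) + mset (drop k X)" by simp
    hence "mset (take k X) \<subseteq># image_mset p (mset_set I)" using msX by simp
    then obtain T where T: "T \<subseteq> I" "mset (take k X) = image_mset p (mset_set T)"
      using msub_image[OF finI] by blast
    have fT: "finite T" using T finI finite_subset by blast
    have "card T = size (image_mset p (mset_set T))" using fT by simp
    also have "\<dots> = k" using T(2)[symmetric] that lenX by simp
    finally have cT: "card T = k" .
    have "T \<noteq> {}" using cT Suc by auto
    then obtain t0 where t0: "t0 \<in> T" by blast
    have "sum_list (take k X) = sum_mset (mset (take k X))" by (simp add: sum_mset_sum_list)
    also have "\<dots> = (\<Sum>t\<in>T. p t)" unfolding T(2) by (simp add: sum_unfold_sum_mset)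
    also have "\<dots> \<le> sigma1_sq v T" unfolding pv by (rule sig_K1[OF fT t0 assms(3)])
    also have "\<dots> \<le> S k'" by (rule S_ge) (use T cT Suc in auto)
    also have "\<dots> = (\<Sum>i<k. ys ! i)" using ysum[of k'] Suc that by simp
    also have "\<dots> = sum_list (take k ys)" using sumtake[of k ys] that lenys by simp
    finally show ?thesis .
  qed
  have sumX: "sum_list X = real L"
  proof -
    have "sum_list X = sum_mset (mset X)" by (simp add: sum_mset_sum_list)
    also have "\<dots> = (\<Sum>t\<in>I. p t)" unfolding msX by (simp add: sum_unfold_sum_mset)
    finally show ?thesis using sumP by simp
  qed
  have sumys: "sum_list ys = real L"
  proof -
    have "sum_list ys = sum_list (take N ys)" using lenys by simp
    also have "\<dots> = (\<Sum>i<Suc (N - 1). ys ! i)" using sumtake[of N ys] lenys N1 by simp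
    also have "\<dots> = S (N - 1)" using ysum[of "N - 1"] N1 by simp
    finally show ?thesis using Sfull sigI by simp
  qed
  have sumxs: "sum_list xs = real L"
  proof -
    have "sum_list xs = sum_mset (mset xs)" by (simp add: sum_mset_sum_list)
    also have "\<dots> = (\<Sum>t\<in>I. p t)" unfolding msxs by (simp add: sum_unfold_sum_mset)
    finally show ?thesis using sumP by simp
  qed
  have maj: "majorized xs ys"
    unfolding majorized_def
  proof (intro conjI allI impI)
    show "length xs = length ys" using lenxs lenys by simp
    show "sum_list xs = sum_list ys" using sumxs sumys by simp
    fix n assume "n \<le> length xs"
    hence "sum_list (take n X) \<le> sum_list (take n ys)" using Q lenxs by simp
    also have "\<dots> \<le> sum_list (take n (rev (sort ys)))" by (rule take_le_top)
    finally show "sum_list (take n (rev (sort xs))) \<le> sum_list (take n (rev (sort ys)))"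
      unfolding X_def .
  qed
  have kar: "(\<Sum>i<N. X!i * ln (X!i)) \<le> (\<Sum>i<N. ys!i * ln (ys!i))"
  proof (rule karamata)
    show "0 \<le> X ! i" if "i < N" for i using setX that lenX by simp
    show "0 \<le> ys ! i" if "i < N" for i using ysnn that by simp
    show "X ! j \<le> X ! i" if "i \<le> j" "j < N" for i j
    proof (cases "i = j")
      case True thus ?thesis by simp
    next
      case False
      hence "i < j" using that by simp
      from sorted_wrt_nth_less[OF sorted_rev_sort[of xs, folded X_def] this] that lenX
      show ?thesis by simp
    qed
    show "(\<Sum>i<k. X ! i) \<le> (\<Sum>i<k. ys ! i)" if "k \<le> N" for k
      using Q[OF that] sumtake[of k X] sumtake[of k ys] that lenX lenys by simp
    show "(\<Sum>i<N. X ! i) = (\<Sum>i<N. ys ! i)"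
      using sumX sumys sumtake[of N X] sumtake[of N ys] lenX lenys by simp
  qed
  have lhsE: "(\<Sum>i<N. X!i * ln (X!i)) = (\<Sum>t\<in>I. p t * ln (p t))"
  proof -
    have "(\<Sum>i<N. X!i * ln (X!i)) = sum_list (map (\<lambda>z. z * ln z) X)"
      by (simp add: sum_list_sum_nth lenX atLeast0LessThan)
    also have "\<dots> = sum_mset (image_mset (\<lambda>z. z * ln z) (mset X))"
      by (simp flip: sum_mset_sum_list)
    also have "\<dots> = (\<Sum>t\<in>I. p t * ln (p t))"
      unfolding msX by (simp add: sum_unfold_sum_mset multiset.map_comp o_def)
    finally show ?thesis .
  qed
  obtain M where NM: "N = Suc M" using N1 by (cases N) auto
  have rhsE: "(\<Sum>i<N. ys!i * ln (ys!i)) = (\<Sum>k=1..N - 1. (S k - S (k - 1)) * ln (S k - S (k - 1)))"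
  proof -
    have "(\<Sum>i<N. ys!i * ln (ys!i)) = ys!0 * ln (ys!0) + (\<Sum>i<M. ys!(Suc i) * ln (ys!(Suc i)))"
      unfolding NM by (rule sum.lessThan_Suc_shift)
    also have "\<dots> = (\<Sum>i<M. (S (Suc i) - S i) * ln (S (Suc i) - S i))"
      using ys0 ysS NM by simp
    also have "\<dots> = (\<Sum>k=Suc 0..M. (S k - S (k - 1)) * ln (S k - S (k - 1)))"
      by (simp add: sum.atLeast1_atMost_eq)
    finally show ?thesis using NM by simp
  qed
  have ent: "(\<Sum>j<L. shannon_H (\<lambda>i. p (i, j)) UNIV) = - (\<Sum>t\<in>I. p t * ln (p t))"
  proof -
    have "(\<Sum>j<L. shannon_H (\<lambda>i. p (i, j)) UNIV) = - (\<Sum>j<L. \<Sum>i\<in>UNIV. p (i,j) * ln (p (i,j)))"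
      by (simp add: shannon_H_def sum_negf)
    also have "(\<Sum>j<L. \<Sum>i\<in>UNIV. p (i,j) * ln (p (i,j))) = (\<Sum>i\<in>UNIV. \<Sum>j<L. p (i,j) * ln (p (i,j)))"
      by (rule sum.swap)
    also have "\<dots> = (\<Sum>(i,j)\<in>(UNIV::'n set) \<times> {..<L}. p (i,j) * ln (p (i,j)))"
      by (rule sum.cartesian_product)
    also have "\<dots> = (\<Sum>t\<in>I. p t * ln (p t))"
      unfolding I_def by (simp add: case_prod_unfold)
    finally show ?thesis .
  qed
  have "(\<Sum>j<L. shannon_H (\<lambda>i. p (i, j)) UNIV) \<ge> - (\<Sum>k=1..N - 1. (S k - S (k - 1)) * ln (S k - S (k - 1)))"
    using kar lhsE rhsE ent by simp
  with maj show ?thesis unfolding xs_def ys_def g_def I_def N_def by simp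
qed

end
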